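(* Assume $A$ is good and $(x,w_x)$ is an optimal pair. Then there exists $k\ge0$ such that $\sigma^k(w_x)\in M$ (the support of the maximizing probability of $A^*$), and for such $k$ the pair $\hat T^{-k}(x,w_x)$ is again an optimal pair, where $\hat T^{-1}(x,w)=(\tau_wx,\sigma w)$.
   Context: $\Sigma=\{0,1\}^{\mathbb N}$; $T$ and $\sigma$ denote the shift acting on points $x$ and $w$ respectively; $\tau_w(x)=(w_0,x_0,x_1,\dots)$. $A$ is Hölder with involution kernel $W(w,x)$ and dual potential $A^*$: $A^*(w)=A(\tau_wx)+W(\sigma w,\tau_wx)-W(w,x)$; normalize $m(A)=m(A^* )=0$. $V,V^*$ are calibrated subactions for $A,A^*$; $R^*(w)=V^*(\sigma w)-V^*(w)-A^*(w)\ge0$, $I^*(w)=\sum_{n\ge0}R^*(\sigma^nw)$. It is known that, after adding a constant to $W$, $V(x)=\sup_w[W(w,x)-V^*(w)-I^*(w)]$; $b(x,w)=V(x)+V^*(w)+I^*(w)-W(w,x)\ge 0$ and $(x,w)$ is optimal iff $b(x,w)=0$. Assume the maximizing probability of $A^*$ is unique and supported on a periodic orbit $M$; $P=\{w\notin M:\sigma w\in M\}$; $A$ is good if $R^*>0$ on $P$. *)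

theory Defs
  imports "HOL-Probability.Probability"
begin

type_synonym seq = "nat \<Rightarrow> bool"

text \<open>The shift (denoted T on points x and sigma on points w).\<close>
definition shift :: "seq \<Rightarrow> seq" where
  "shift x = (\<lambda>n. x (Suc n))"

definition tau :: "seq \<Rightarrow> seq \<Rightarrow> seq" where
  "tau w x = (\<lambda>n. case n of 0 \<Rightarrow> w 0 | Suc m \<Rightarrow> x m)"

definition sdist :: "seq \<Rightarrow> seq \<Rightarrow> real" where
  "sdist x y = (if x = y then 0 else (1/2) ^ (LEAST n. x n \<noteq> y n))"

definition holder :: "(seq \<Rightarrow> real) \<Rightarrow> bool" where
  "holder f \<longleftrightarrow> (\<exists>C \<alpha>. C \<ge> 0 \<and> \<alpha> > 0 \<and>
      (\<forall>x y. \<bar>f x - f y\<bar> \<le> C * sdist x y powr \<alpha>))"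

definition cont_seq :: "(seq \<Rightarrow> real) \<Rightarrow> bool" where
  "cont_seq f \<longleftrightarrow> (\<forall>x \<epsilon>. \<epsilon> > 0 \<longrightarrow>
      (\<exists>\<delta>>0. \<forall>y. sdist x y < \<delta> \<longrightarrow> \<bar>f y - f x\<bar> < \<epsilon>))"

definition cont_seq2 :: "(seq \<Rightarrow> seq \<Rightarrow> real) \<Rightarrow> bool" where
  "cont_seq2 f \<longleftrightarrow> (\<forall>w x \<epsilon>. \<epsilon> > 0 \<longrightarrow>
      (\<exists>\<delta>>0. \<forall>w' x'. sdist w w' < \<delta> \<and> sdist x x' < \<delta> \<longrightarrow> \<bar>f w' x' - f w x\<bar> < \<epsilon>))"

text \<open>Borel (= cylinder) sigma algebra on Sigma.\<close>
definition SigmaM :: "seq measure" where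
  "SigmaM = Pi\<^sub>M UNIV (\<lambda>_. count_space UNIV)"

definition invariant_prob :: "seq measure \<Rightarrow> bool" where
  "invariant_prob \<mu> \<longleftrightarrow> sets \<mu> = sets SigmaM \<and> prob_space \<mu> \<and>
      shift \<in> measurable \<mu> \<mu> \<and> distr \<mu> \<mu> shift = \<mu>"

definition mval :: "(seq \<Rightarrow> real) \<Rightarrow> real" where
  "mval f = (SUP \<mu> \<in> {\<mu>. invariant_prob \<mu>}. integral\<^sup>L \<mu> f)"

definition maximizing :: "(seq \<Rightarrow> real) \<Rightarrow> seq measure \<Rightarrow> bool" where
  "maximizing f \<mu> \<longleftrightarrow> invariant_prob \<mu> \<and> integral\<^sup>L \<mu> f = mval f"

definition periodic_orbit :: "seq set \<Rightarrow> bool" where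
  "periodic_orbit M \<longleftrightarrow> (\<exists>p n. n > 0 \<and> (shift ^^ n) p = p \<and>
      M = {(shift ^^ i) p | i. i < n})"

definition calibrated_subaction :: "(seq \<Rightarrow> real) \<Rightarrow> (seq \<Rightarrow> real) \<Rightarrow> bool" where
  "calibrated_subaction f V \<longleftrightarrow>
     (\<forall>x. V (shift x) \<ge> V x + f x) \<and> (\<forall>y. \<exists>x. shift x = y \<and> V y = V x + f x)"

definition R_star :: "(seq \<Rightarrow> real) \<Rightarrow> (seq \<Rightarrow> real) \<Rightarrow> seq \<Rightarrow> real" where
  "R_star Vs As w = Vs (shift w) - Vs w - As w"

definition I_star :: "(seq \<Rightarrow> real) \<Rightarrow> (seq \<Rightarrow> real) \<Rightarrow> seq \<Rightarrow> ereal" where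
  "I_star Vs As w = (\<Sum>n. ereal (R_star Vs As ((shift ^^ n) w)))"

definition b_fun :: "(seq \<Rightarrow> real) \<Rightarrow> (seq \<Rightarrow> real) \<Rightarrow> (seq \<Rightarrow> real)
    \<Rightarrow> (seq \<Rightarrow> seq \<Rightarrow> real) \<Rightarrow> seq \<Rightarrow> seq \<Rightarrow> ereal" where
  "b_fun V Vs As W x w = ereal (V x + Vs w - W w x) + I_star Vs As w"

definition optimal_pair :: "(seq \<Rightarrow> real) \<Rightarrow> (seq \<Rightarrow> real) \<Rightarrow> (seq \<Rightarrow> real)
    \<Rightarrow> (seq \<Rightarrow> seq \<Rightarrow> real) \<Rightarrow> seq \<Rightarrow> seq \<Rightarrow> bool" where
  "optimal_pair V Vs As W x w \<longleftrightarrow> b_fun V Vs As W x w = 0"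

definition hatTinv :: "seq \<times> seq \<Rightarrow> seq \<times> seq" where
  "hatTinv p = (tau (snd p) (fst p), shift (snd p))"

end

theory Submission
  imports Defs "HOL-Library.Diagonal_Subsequence"
begin

lemma Rs_nonneg: "calibrated_subaction As Vs \<Longrightarrow> R_star Vs As w \<ge> 0"
  unfolding calibrated_subaction_def R_star_def by (smt (verit))

lemma I_star_nonneg: "calibrated_subaction As Vs \<Longrightarrow> I_star Vs As w \<ge> 0"
  unfolding I_star_def by (simp add: Rs_nonneg suminf_nonneg summable_ereal_pos)

lemma I_star_finite:
  assumes cal: "calibrated_subaction As Vs" and fin: "I_star Vs As w = ereal c"
  shows "summable (\<lambda>n. R_star Vs As ((shift ^^ n) w)) \<and> c = (\<Sum>n. R_star Vs As ((shift ^^ n) w))"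
proof -
  let ?f = "\<lambda>n. R_star Vs As ((shift ^^ n) w)"
  have nn: "\<And>n. 0 \<le> ?f n" using Rs_nonneg[OF cal] by simp
  have ne: "(\<Sum>n. ereal (?f n)) \<noteq> \<infinity>" using fin unfolding I_star_def by simp
  have e: "(\<Sum>n. ereal (?f n)) = ereal (suminf ?f)" by (rule suminf_ereal[OF nn ne])
  have s: "summable ?f"
    by (metis e nn summable_ereal summable_ereal_pos ne suminf_ereal_finite_neg
        ereal_less_eq(3) less_ereal.simps(1))
  show ?thesis using e fin s unfolding I_star_def by simp
qed


lemma b_nonneg:
  assumes cal: "calibrated_subaction As Vs"
    and V_sup: "\<And>y. ereal (V y) = (SUP w. ereal (W w y - Vs w) - I_star Vs As w)"
  shows "b_fun V Vs As W y w \<ge> 0"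
proof -
  have le: "ereal (W w y - Vs w) - I_star Vs As w \<le> ereal (V y)"
    unfolding V_sup by (rule SUP_upper) simp
  have I0: "I_star Vs As w \<ge> 0" by (rule I_star_nonneg[OF cal])
  show ?thesis
  proof (cases "I_star Vs As w")
    case (real r)
    then show ?thesis using le unfolding b_fun_def by simp
  next
    case PInf then show ?thesis unfolding b_fun_def by simp
  next
    case MInf then show ?thesis using I0 by simp
  qed
qed

lemma opt_step:
  assumes cal: "calibrated_subaction As Vs"
    and V_cal: "calibrated_subaction A V"
    and kernel: "\<And>w y. As w = A (tau w y) + W (shift w) (tau w y) - W w y"
    and V_sup: "\<And>y. ereal (V y) = (SUP w. ereal (W w y - Vs w) - I_star Vs As w)"
    and opt: "optimal_pair V Vs As W x w"
  shows "optimal_pair V Vs As W (tau w x) (shift w)"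
proof -
  let ?f = "\<lambda>n. R_star Vs As ((shift ^^ n) w)"
  have b0: "ereal (V x + Vs w - W w x) + I_star Vs As w = 0"
    using opt unfolding optimal_pair_def b_fun_def .
  then obtain c where c: "I_star Vs As w = ereal c"
    by (cases "I_star Vs As w") auto
  with b0 have cval: "c = W w x - V x - Vs w" by simp
  from I_star_finite[OF cal c] have s: "summable ?f" and cs: "c = suminf ?f" by auto
  have s2: "summable (\<lambda>n. ?f (Suc n))" using s summable_Suc_iff[of ?f] by simp
  have split: "suminf (\<lambda>n. ?f (Suc n)) = suminf ?f - ?f 0"
    using suminf_split_head[OF s] .
  have I2: "I_star Vs As (shift w) = ereal (suminf (\<lambda>n. ?f (Suc n)))"
    unfolding I_star_def using suminf_ereal'[OF s2] by (simp add: funpow_swap1)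
  have st: "shift (tau w x) = x" unfolding shift_def tau_def by simp
  have Vle: "V x \<ge> V (tau w x) + A (tau w x)"
    using V_cal st unfolding calibrated_subaction_def by metis
  have Rw: "?f 0 = Vs (shift w) - Vs w - (A (tau w x) + W (shift w) (tau w x) - W w x)"
    using kernel[of w x] by (simp add: R_star_def)
  have "b_fun V Vs As W (tau w x) (shift w) \<le> 0"
    unfolding b_fun_def I2 using split cs cval Rw Vle by simp
  moreover have "b_fun V Vs As W (tau w x) (shift w) \<ge> 0" by (rule b_nonneg[OF cal V_sup])
  ultimately show ?thesis unfolding optimal_pair_def by simp
qed

lemma opt_iter:
  assumes cal: "calibrated_subaction As Vs"
    and V_cal: "calibrated_subaction A V"
    and kernel: "\<And>w y. As w = A (tau w y) + W (shift w) (tau w y) - W w y"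
    and V_sup: "\<And>y. ereal (V y) = (SUP w. ereal (W w y - Vs w) - I_star Vs As w)"
    and opt: "optimal_pair V Vs As W x w"
  shows "optimal_pair V Vs As W (fst ((hatTinv ^^ k) (x, w))) (snd ((hatTinv ^^ k) (x, w)))"
proof (induction k)
  case 0 then show ?case using opt by simp
next
  case (Suc k)
  then show ?case using opt_step[OF cal V_cal kernel V_sup Suc]
    by (simp add: hatTinv_def)
qed

lemma snd_hat: "snd ((hatTinv ^^ k) p) = (shift ^^ k) (snd p)"
  by (induction k) (auto simp: hatTinv_def)


definition agree :: "nat \<Rightarrow> seq \<Rightarrow> seq \<Rightarrow> bool" where
  "agree L x y \<longleftrightarrow> (\<forall>i<L. x i = y i)"

definition ccont :: "(seq \<Rightarrow> real) \<Rightarrow> bool" where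
  "ccont f \<longleftrightarrow> (\<forall>x \<epsilon>. \<epsilon> > 0 \<longrightarrow> (\<exists>L. \<forall>y. agree L x y \<longrightarrow> \<bar>f y - f x\<bar> < \<epsilon>))"

lemma agree_sym: "agree L x y = agree L y x" unfolding agree_def by auto
lemma agree_trans: "agree L x y \<Longrightarrow> agree L y z \<Longrightarrow> agree L x z" unfolding agree_def by auto
lemma agree_mono: "agree L x y \<Longrightarrow> L' \<le> L \<Longrightarrow> agree L' x y" unfolding agree_def by auto
lemma agree_shift: "agree (Suc L) x y \<Longrightarrow> agree L (shift x) (shift y)"
  unfolding agree_def shift_def by auto

lemma sdist_agree: "agree L x y \<Longrightarrow> sdist x y \<le> (1/2)^L"
proof (cases "x = y")
  case False
  assume a: "agree L x y"
  obtain n where n: "x n \<noteq> y n" using False by auto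
  have "L \<le> (LEAST n. x n \<noteq> y n)"
  proof (rule ccontr)
    assume "\<not> ?thesis"
    then have "(LEAST n. x n \<noteq> y n) < L" by simp
    moreover have "x (LEAST n. x n \<noteq> y n) \<noteq> y (LEAST n. x n \<noteq> y n)" by (rule LeastI[of _ n]) (rule n)
    ultimately show False using a unfolding agree_def by auto
  qed
  then show ?thesis using False unfolding sdist_def by (simp add: power_decreasing)
qed (simp add: sdist_def)

lemma small_pow: "(\<delta>::real) > 0 \<Longrightarrow> \<exists>L. (1/2::real)^L < \<delta>"
  by (simp add: real_arch_pow_inv)

lemma cont_seq_ccont: "cont_seq f \<Longrightarrow> ccont f"
  unfolding cont_seq_def ccont_def
proof (intro allI impI)
  fix x and \<epsilon> :: real
  assume c: "\<forall>x \<epsilon>. 0 < \<epsilon> \<longrightarrow> (\<exists>\<delta>>0. \<forall>y. sdist x y < \<delta> \<longrightarrow> \<bar>f y - f x\<bar> < \<epsilon>)" and e: "\<epsilon> > 0"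
  then obtain \<delta> where d: "\<delta> > 0" "\<forall>y. sdist x y < \<delta> \<longrightarrow> \<bar>f y - f x\<bar> < \<epsilon>" by blast
  obtain L where L: "(1/2::real)^L < \<delta>" using small_pow[OF d(1)] by blast
  show "\<exists>L. \<forall>y. agree L x y \<longrightarrow> \<bar>f y - f x\<bar> < \<epsilon>"
    using d L sdist_agree by (meson le_less_trans)
qed

lemma cont2_agree:
  assumes "cont_seq2 W" "\<epsilon> > 0"
  shows "\<exists>L. \<forall>w' x'. agree L w w' \<and> agree L x x' \<longrightarrow> \<bar>W w' x' - W w x\<bar> < \<epsilon>"
proof -
  obtain \<delta> where d: "\<delta> > 0" "\<forall>w' x'. sdist w w' < \<delta> \<and> sdist x x' < \<delta> \<longrightarrow> \<bar>W w' x' - W w x\<bar> < \<epsilon>"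
    using assms unfolding cont_seq2_def by blast
  obtain L where L: "(1/2::real)^L < \<delta>" using small_pow[OF d(1)] by blast
  show ?thesis using d L sdist_agree by (meson le_less_trans)
qed

lemma tau_agree: "w 0 = w' 0 \<Longrightarrow> tau w y = tau w' y"
  unfolding tau_def by (auto split: nat.splits)

lemma As_ccont:
  assumes W_cont: "cont_seq2 W"
    and kernel: "\<And>w y. As w = A (tau w y) + W (shift w) (tau w y) - W w y"
  shows "ccont As"
  unfolding ccont_def
proof (intro allI impI)
  fix x and \<epsilon> :: real assume e: "\<epsilon> > 0"
  define y0 :: seq where "y0 = (\<lambda>_. False)"
  obtain L1 where L1: "\<forall>w' x'. agree L1 (shift x) w' \<and> agree L1 (tau x y0) x' \<longrightarrow>
      \<bar>W w' x' - W (shift x) (tau x y0)\<bar> < \<epsilon>/2"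
    using cont2_agree[OF W_cont, where \<epsilon>="\<epsilon>/2" and w="shift x" and x="tau x y0"] e by auto
  obtain L2 where L2: "\<forall>w' x'. agree L2 x w' \<and> agree L2 y0 x' \<longrightarrow>
      \<bar>W w' x' - W x y0\<bar> < \<epsilon>/2"
    using cont2_agree[OF W_cont, where \<epsilon>="\<epsilon>/2" and w="x" and x="y0"] e by auto
  show "\<exists>L. \<forall>y. agree L x y \<longrightarrow> \<bar>As y - As x\<bar> < \<epsilon>"
  proof (intro exI allI impI)
    fix y assume a: "agree (Suc (max L1 L2)) x y"
    have t: "tau y y0 = tau x y0" using a unfolding agree_def by (intro tau_agree) auto
    have a1: "agree L1 (shift x) (shift y)" using agree_shift[OF agree_mono[OF a]] by simp
    have a2: "agree L2 x y" using agree_mono[OF a] by simp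
    have h1: "\<bar>W (shift y) (tau x y0) - W (shift x) (tau x y0)\<bar> < \<epsilon>/2"
      using L1 a1 by (auto simp: agree_def)
    have h2: "\<bar>W y y0 - W x y0\<bar> < \<epsilon>/2" using L2 a2 by (auto simp: agree_def)
    have "As y - As x = (W (shift y) (tau x y0) - W (shift x) (tau x y0)) - (W y y0 - W x y0)"
      using kernel[of y y0] kernel[of x y0] t by simp
    then show "\<bar>As y - As x\<bar> < \<epsilon>" using h1 h2 by linarith
  qed
qed

lemma ccont_diff: "ccont f \<Longrightarrow> ccont g \<Longrightarrow> ccont (\<lambda>x. f x - g x)"
  unfolding ccont_def
proof (intro allI impI)
  fix x and \<epsilon>::real assume f: "\<forall>x \<epsilon>. 0 < \<epsilon> \<longrightarrow> (\<exists>L. \<forall>y. agree L x y \<longrightarrow> \<bar>f y - f x\<bar> < \<epsilon>)"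
    and g: "\<forall>x \<epsilon>. 0 < \<epsilon> \<longrightarrow> (\<exists>L. \<forall>y. agree L x y \<longrightarrow> \<bar>g y - g x\<bar> < \<epsilon>)" and e: "\<epsilon> > 0"
  obtain L1 where L1: "\<forall>y. agree L1 x y \<longrightarrow> \<bar>f y - f x\<bar> < \<epsilon>/2" using f e by (meson half_gt_zero)
  obtain L2 where L2: "\<forall>y. agree L2 x y \<longrightarrow> \<bar>g y - g x\<bar> < \<epsilon>/2" using g e by (meson half_gt_zero)
  show "\<exists>L. \<forall>y. agree L x y \<longrightarrow> \<bar>f y - g y - (f x - g x)\<bar> < \<epsilon>"
  proof (intro exI allI impI)
    fix y assume "agree (max L1 L2) x y"
    then have "\<bar>f y - f x\<bar> < \<epsilon>/2" "\<bar>g y - g x\<bar> < \<epsilon>/2" using L1 L2 agree_mono by auto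
    then show "\<bar>f y - g y - (f x - g x)\<bar> < \<epsilon>" by linarith
  qed
qed

lemma ccont_shift: "ccont f \<Longrightarrow> ccont (\<lambda>x. f (shift x))"
  unfolding ccont_def
proof (intro allI impI)
  fix x and \<epsilon>::real assume f: "\<forall>x \<epsilon>. 0 < \<epsilon> \<longrightarrow> (\<exists>L. \<forall>y. agree L x y \<longrightarrow> \<bar>f y - f x\<bar> < \<epsilon>)" and e: "\<epsilon> > 0"
  obtain L where L: "\<forall>y. agree L (shift x) y \<longrightarrow> \<bar>f y - f (shift x)\<bar> < \<epsilon>" using f e by blast
  show "\<exists>L. \<forall>y. agree L x y \<longrightarrow> \<bar>f (shift y) - f (shift x)\<bar> < \<epsilon>"
    using L agree_shift by blast
qed

lemma Rs_ccont:
  assumes "ccont Vs" "ccont As" shows "ccont (R_star Vs As)"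
proof -
  have "R_star Vs As = (\<lambda>x. (Vs (shift x) - Vs x) - As x)" unfolding R_star_def by auto
  then show ?thesis using assms by (simp add: ccont_diff ccont_shift)
qed


lemma diag_subseq:
  fixes E :: "nat \<Rightarrow> nat \<Rightarrow> real"
  assumes bdd: "\<And>N k. \<bar>E N k\<bar> \<le> B"
  shows "\<exists>r l. strict_mono r \<and> (\<forall>k. (\<lambda>N. E (r N) k) \<longlonglongrightarrow> l k)"
proof -
  let ?P = "\<lambda>n. \<lambda>s. convergent (\<lambda>k. E (s k) n)"
  interpret nat: subseqs ?P
  proof (unfold convergent_def, unfold subseqs_def, auto)
    fix n :: nat and s :: "nat \<Rightarrow> nat" assume s: "strict_mono s"
    have "bounded {-B..B}"
      using bounded_closed_interval by auto
    moreover have "\<And>k. E (s k) n \<in> {-B..B}"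
      using bdd by (simp add: abs_le_iff minus_le_iff)
    ultimately have "\<exists>l s'. strict_mono s' \<and> ((\<lambda>k. E (s k) n) \<circ> s') \<longlonglongrightarrow> l"
      using compact_Icc compact_imp_seq_compact seq_compactE by metis
    thus "\<exists>s'. strict_mono (s'::nat\<Rightarrow>nat) \<and> (\<exists>l. (\<lambda>k. E (s (s' k)) n) \<longlonglongrightarrow> l)"
      by (auto simp: comp_def)
  qed
  define d where "d = nat.diagseq"
  have subseq: "strict_mono d"
    unfolding d_def using nat.subseq_diagseq by auto
  have rat_cnv: "?P n d" for n
  proof -
    have Pn_seqseq: "?P n (nat.seqseq (Suc n))"
      by (rule nat.seqseq_holds)
    have 1: "(\<lambda>k. E ((nat.seqseq (Suc n) \<circ> (\<lambda>k. nat.fold_reduce (Suc n) k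
      (Suc n + k))) k) n) = (\<lambda>k. E (nat.seqseq (Suc n) k) n) \<circ>
      (\<lambda>k. nat.fold_reduce (Suc n) k (Suc n + k))"
      by auto
    have 2: "?P n (d \<circ> ((+) (Suc n)))"
      unfolding d_def nat.diagseq_seqseq 1
      by (intro convergent_subseq_convergent Pn_seqseq nat.subseq_diagonal_rest)
    then obtain L where 3: "(\<lambda>na. E (d (na + Suc n)) n) \<longlonglongrightarrow> L"
      by (auto simp: add.commute dest: convergentD)
    then have "(\<lambda>k. E (d k) n) \<longlonglongrightarrow> L"
      by (rule LIMSEQ_offset)
    then show ?thesis
      by (auto simp: convergent_def)
  qed
  show ?thesis
  proof (intro exI conjI allI)
    show "strict_mono d" by (rule subseq)
    fix k show "(\<lambda>N. E (d N) k) \<longlonglongrightarrow> lim (\<lambda>N. E (d N) k)"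
      using rat_cnv[of k] by (simp add: convergent_LIMSEQ_iff)
  qed
qed

lemma seq_compact_sigma:
  fixes xs :: "nat \<Rightarrow> seq"
  shows "\<exists>r z. strict_mono r \<and> (\<forall>L. eventually (\<lambda>N. agree L (xs (r N)) z) sequentially)"
proof -
  define E where "E N k = (if xs N k then 1 else (0::real))" for N k
  have "\<And>N k. \<bar>E N k\<bar> \<le> 1" unfolding E_def by auto
  then obtain r l where r: "strict_mono r" and l: "\<And>k. (\<lambda>N. E (r N) k) \<longlonglongrightarrow> l k"
    using diag_subseq by blast
  define z where "z k = (l k > 1/2)" for k
  have ev: "eventually (\<lambda>N. xs (r N) k = z k) sequentially" for k
  proof -
    have "eventually (\<lambda>N. dist (E (r N) k) (l k) < 1/4) sequentially"
      using l[of k] unfolding tendsto_iff by (metis divide_pos_pos zero_less_numeral zero_less_one)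
    moreover have "eventually (\<lambda>N. dist (E (r N) k) (l k) < 1/4) sequentially \<Longrightarrow>
       eventually (\<lambda>N. xs (r N) k = z k) sequentially"
    proof -
      assume e: "eventually (\<lambda>N. dist (E (r N) k) (l k) < 1/4) sequentially"
      then obtain N0 where N0: "\<And>N. N \<ge> N0 \<Longrightarrow> dist (E (r N) k) (l k) < 1/4"
        by (auto simp: eventually_sequentially)
      have "xs (r N) k = z k" if "N \<ge> N0" for N
        using N0[OF that] unfolding E_def z_def dist_real_def by (auto split: if_splits simp: abs_if)
      then show ?thesis by (auto simp: eventually_sequentially)
    qed
    ultimately show ?thesis by blast
  qed
  have "eventually (\<lambda>N. agree L (xs (r N)) z) sequentially" for L
  proof -
    have "eventually (\<lambda>N. \<forall>k\<in>{..<L}. xs (r N) k = z k) sequentially"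
      using ev by (simp add: eventually_ball_finite)
    then show ?thesis unfolding agree_def by (rule eventually_mono) auto
  qed
  then show ?thesis using r by blast
qed

lemma ccont_unif:
  assumes f: "ccont f" and e: "\<epsilon> > 0"
  shows "\<exists>L. \<forall>x y. agree L x y \<longrightarrow> \<bar>f x - f y\<bar> < \<epsilon>"
proof (rule ccontr)
  assume "\<not> ?thesis"
  then have "\<forall>L. \<exists>x y. agree L x y \<and> \<bar>f x - f y\<bar> \<ge> \<epsilon>" by (auto simp: not_less)
  then obtain xs ys where xy: "\<And>L. agree L (xs L) (ys L) \<and> \<bar>f (xs L) - f (ys L)\<bar> \<ge> \<epsilon>" by metis
  obtain r z where r: "strict_mono r" and ev: "\<And>L. eventually (\<lambda>N. agree L (xs (r N)) z) sequentially"
    using seq_compact_sigma by blast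
  obtain L0 where L0: "\<forall>y. agree L0 z y \<longrightarrow> \<bar>f y - f z\<bar> < \<epsilon>/2"
    using f e unfolding ccont_def by (meson half_gt_zero)
  obtain N0 where N0: "\<And>N. N \<ge> N0 \<Longrightarrow> agree L0 (xs (r N)) z"
    using ev[of L0] by (auto simp: eventually_sequentially)
  define N where "N = max N0 L0"
  have a1: "agree L0 (xs (r N)) z" using N0 N_def by simp
  have "r N \<ge> N" by (rule seq_suble[OF r])
  then have "r N \<ge> L0" unfolding N_def by simp
  then have a2: "agree L0 (xs (r N)) (ys (r N))" using xy agree_mono by blast
  have "agree L0 z (ys (r N))" using a1 a2 agree_trans agree_sym by blast
  moreover have "agree L0 z (xs (r N))" using a1 agree_sym by blast
  ultimately have "\<bar>f (xs (r N)) - f z\<bar> < \<epsilon>/2" "\<bar>f (ys (r N)) - f z\<bar> < \<epsilon>/2" using L0 by auto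
  then have "\<bar>f (xs (r N)) - f (ys (r N))\<bar> < \<epsilon>" by linarith
  then show False using xy[of "r N"] by linarith
qed

definition pad :: "nat \<Rightarrow> seq \<Rightarrow> seq" where
  "pad L x = (\<lambda>i. if i < L then x i else False)"

lemma agree_pad: "agree L x (pad L x)" unfolding agree_def pad_def by simp

lemma finite_range_pad: "finite (range (pad L))"
proof -
  have "range (pad L) \<subseteq> (\<lambda>s i. if i < L then s ! i else False) ` {s. length s = L}"
  proof
    fix y assume "y \<in> range (pad L)"
    then obtain x where y: "y = pad L x" by auto
    have "y = (\<lambda>i. if i < L then map x [0..<L] ! i else False)"
      unfolding y pad_def by auto
    then show "y \<in> (\<lambda>s i. if i < L then s ! i else False) ` {s. length s = L}" by force
  qed
  moreover have "finite {s::bool list. length s = L}" using finite_lists_length_eq[of "UNIV::bool set" L] by simp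
  ultimately show ?thesis by (meson finite_imageI finite_subset)
qed

lemma ccont_bounded:
  assumes f: "ccont f" shows "\<exists>B. \<forall>x. \<bar>f x\<bar> \<le> B"
proof -
  obtain L where L: "\<forall>x y. agree L x y \<longrightarrow> \<bar>f x - f y\<bar> < 1" using ccont_unif[OF f] by force
  define B where "B = Max ((\<lambda>y. \<bar>f y\<bar>) ` range (pad L)) + 1"
  have "\<bar>f x\<bar> \<le> B" for x
  proof -
    have "\<bar>f (pad L x)\<bar> \<le> Max ((\<lambda>y. \<bar>f y\<bar>) ` range (pad L))"
      by (rule Max_ge) (auto simp: finite_range_pad)
    moreover have "\<bar>f x - f (pad L x)\<bar> < 1" using L agree_pad by blast
    ultimately show ?thesis unfolding B_def by linarith
  qed
  then show ?thesis by blast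
qed


definition cyl :: "bool list \<Rightarrow> seq set" where
  "cyl s = {x. \<forall>i<length s. x i = s ! i}"

lemma space_SigmaM[simp]: "space SigmaM = UNIV"
  unfolding SigmaM_def by (simp add: space_PiM PiE_def extensional_def)

lemma map_eq_cyl: "(map x [0..<L] = s) \<longleftrightarrow> (length s = L \<and> x \<in> cyl s)"
  unfolding cyl_def by (auto simp: list_eq_iff_nth_eq)

lemma comp_meas[measurable]: "(\<lambda>x. x i) \<in> measurable SigmaM (count_space UNIV)"
  unfolding SigmaM_def by (rule measurable_component_singleton) simp

lemma comp_sets: "(\<lambda>x. x i) -` A \<in> sets SigmaM"
  using measurable_sets[OF comp_meas, of A i] by simp

lemma cyl_sets[measurable]: "cyl s \<in> sets SigmaM"
proof (cases "s = []")
  case True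
  then have "cyl s = space SigmaM" unfolding cyl_def by simp
  then show ?thesis using sets.top[of SigmaM] by simp
next
  case False
  have "cyl s = (\<Inter>i\<in>{..<length s}. (\<lambda>x. x i) -` {s ! i})"
    unfolding cyl_def by auto
  also have "\<dots> \<in> sets SigmaM"
    by (rule sets.finite_INT) (use False comp_sets in auto)
  finally show ?thesis .
qed

lemma prefix_meas: "(\<lambda>x. map x [0..<L]) \<in> measurable SigmaM (count_space UNIV)"
proof (subst measurable_count_space_eq_countable)
  show "countable (UNIV :: bool list set)" by simp
  show "(\<lambda>x. map x [0..<L]) \<in> space SigmaM \<rightarrow> UNIV \<and>
    (\<forall>a\<in>UNIV. (\<lambda>x. map x [0..<L]) -` {a} \<inter> space SigmaM \<in> sets SigmaM)"
  proof (intro conjI ballI)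
    fix a :: "bool list"
    show "(\<lambda>x. map x [0..<L]) -` {a} \<inter> space SigmaM \<in> sets SigmaM"
    proof (cases "length a = L")
      case True
      then have "(\<lambda>x. map x [0..<L]) -` {a} \<inter> space SigmaM = cyl a"
        using map_eq_cyl by auto
      then show ?thesis by simp
    next
      case False
      then have "(\<lambda>x. map x [0..<L]) -` {a} \<inter> space SigmaM = {}"
        using map_eq_cyl by auto
      then show ?thesis by simp
    qed
  qed simp
qed

lemma pad_prefix: "pad L x = (\<lambda>i. if i < L then map x [0..<L] ! i else False)"
  unfolding pad_def by auto

lemma ccont_meas:
  assumes f: "ccont f" shows "f \<in> borel_measurable SigmaM"
proof (rule borel_measurable_LIMSEQ_real)
  let ?h = "\<lambda>L s. f (\<lambda>i. if i < L then s ! i else False)"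
  show "(\<lambda>x. f (pad L x)) \<in> borel_measurable SigmaM" for L
  proof -
    have "(\<lambda>x. ?h L (map x [0..<L])) \<in> borel_measurable SigmaM"
      by (rule measurable_compose[OF prefix_meas]) simp
    then show ?thesis by (simp add: pad_prefix)
  qed
  fix x
  show "(\<lambda>L. f (pad L x)) \<longlonglongrightarrow> f x"
  proof (rule LIMSEQ_I)
    fix r :: real assume r: "r > 0"
    obtain L where L: "\<forall>y. agree L x y \<longrightarrow> \<bar>f y - f x\<bar> < r" using f r unfolding ccont_def by blast
    have "norm (f (pad n x) - f x) < r" if "n \<ge> L" for n
      using L agree_mono[OF agree_pad that] by simp
    then show "\<exists>no. \<forall>n\<ge>no. norm (f (pad n x) - f x) < r" by blast
  qed
qed

lemma shift_meas[measurable]: "shift \<in> measurable SigmaM SigmaM"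
proof -
  have "(\<lambda>x i. x (Suc i)) \<in> measurable SigmaM (Pi\<^sub>M UNIV (\<lambda>_. count_space UNIV))"
    by (rule measurable_PiM_single') (auto simp: comp_meas)
  then show ?thesis unfolding shift_def[abs_def] by (simp add: SigmaM_def)
qed

lemma cyl_disj: "length s = length t \<Longrightarrow> s \<noteq> t \<Longrightarrow> cyl s \<inter> cyl t = {}"
  unfolding cyl_def by (auto simp: list_eq_iff_nth_eq)

lemma measure_eq_cyl:
  assumes sP: "sets P = sets SigmaM" and sQ: "sets Q = sets SigmaM"
    and fin: "finite_measure P"
    and eq: "\<And>s. emeasure P (cyl s) = emeasure Q (cyl s)"
  shows "P = Q"
proof (rule measure_eqI_PiM_infinite[where I=UNIV and M="\<lambda>_. count_space UNIV"])
  show "sets P = sets (Pi\<^sub>M UNIV (\<lambda>_. count_space UNIV))" using sP by (simp add: SigmaM_def)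
  show "sets Q = sets (Pi\<^sub>M UNIV (\<lambda>_. count_space UNIV))" using sQ by (simp add: SigmaM_def)
  show "finite_measure P" by fact
  fix A :: "nat \<Rightarrow> bool set" and J :: "nat set" assume J: "finite J"
  define L where "L = Suc (Max (insert 0 J))"
  have JL: "i \<in> J \<Longrightarrow> i < L" for i unfolding L_def using J by (simp add: le_imp_less_Suc)
  define Ws where "Ws = {s. length s = L \<and> (\<forall>i\<in>J. s ! i \<in> A i)}"
  have Wf: "finite Ws"
  proof -
    have "finite {xs. set xs \<subseteq> (UNIV::bool set) \<and> length xs = L}"
      by (rule finite_lists_length_eq) simp
    then show ?thesis unfolding Ws_def by (rule rev_finite_subset) blast
  qed
  have set_eq: "prod_emb UNIV (\<lambda>_. count_space UNIV) J (Pi\<^sub>E J A) = (\<Union>s\<in>Ws. cyl s)"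
  proof -
    have "x \<in> prod_emb UNIV (\<lambda>_. count_space UNIV) J (Pi\<^sub>E J A) \<longleftrightarrow> (\<forall>i\<in>J. x i \<in> A i)" for x
      by (simp add: prod_emb_def PiE_iff)
    moreover have "(\<forall>i\<in>J. x i \<in> A i) \<longleftrightarrow> x \<in> (\<Union>s\<in>Ws. cyl s)" for x
    proof
      assume "\<forall>i\<in>J. x i \<in> A i"
      then have "map x [0..<L] \<in> Ws" unfolding Ws_def using JL by auto
      moreover have "x \<in> cyl (map x [0..<L])" unfolding cyl_def by simp
      ultimately show "x \<in> (\<Union>s\<in>Ws. cyl s)" by blast
    next
      assume "x \<in> (\<Union>s\<in>Ws. cyl s)"
      then obtain s where "s \<in> Ws" "x \<in> cyl s" by blast
      then show "\<forall>i\<in>J. x i \<in> A i" unfolding Ws_def cyl_def using JL by force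
    qed
    ultimately show ?thesis by blast
  qed
  have disj: "disjoint_family_on cyl Ws"
    unfolding disjoint_family_on_def Ws_def using cyl_disj by auto
  have "emeasure P (\<Union>s\<in>Ws. cyl s) = (\<Sum>s\<in>Ws. emeasure P (cyl s))"
    by (rule sum_emeasure[symmetric]) (use sP disj Wf in \<open>simp_all add: image_subset_iff\<close>)
  also have "\<dots> = (\<Sum>s\<in>Ws. emeasure Q (cyl s))" using eq by simp
  also have "\<dots> = emeasure Q (\<Union>s\<in>Ws. cyl s)"
    by (rule sum_emeasure) (use sQ disj Wf in \<open>simp_all add: image_subset_iff\<close>)
  finally show "emeasure P (prod_emb UNIV (\<lambda>_. count_space UNIV) J (Pi\<^sub>E J A)) =
       emeasure Q (prod_emb UNIV (\<lambda>_. count_space UNIV) J (Pi\<^sub>E J A))"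
    unfolding set_eq .
qed


definition Aend :: "(bool list \<Rightarrow> real) \<Rightarrow> bool list \<Rightarrow> real" where
  "Aend \<nu> s = (\<Sum>i<length s. if s ! i then \<nu> (take i s @ [False]) else 0)"

lemma Aend_Nil[simp]: "Aend \<nu> [] = 0" unfolding Aend_def by simp

lemma Aend_snoc: "Aend \<nu> (s @ [b]) = Aend \<nu> s + (if b then \<nu> (s @ [False]) else 0)"
proof -
  have "Aend \<nu> (s @ [b]) = (\<Sum>i<Suc (length s). if (s @ [b]) ! i then \<nu> (take i (s @ [b]) @ [False]) else 0)"
    unfolding Aend_def by simp
  also have "\<dots> = (\<Sum>i<length s. if (s @ [b]) ! i then \<nu> (take i (s @ [b]) @ [False]) else 0)
      + (if b then \<nu> (s @ [False]) else 0)" by (simp add: nth_append)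
  also have "(\<Sum>i<length s. if (s @ [b]) ! i then \<nu> (take i (s @ [b]) @ [False]) else 0) = Aend \<nu> s"
    unfolding Aend_def by (intro sum.cong) (auto simp: nth_append)
  finally show ?thesis .
qed

fun pref :: "(bool list \<Rightarrow> real) \<Rightarrow> real \<Rightarrow> nat \<Rightarrow> bool list" where
  "pref \<nu> t 0 = []"
| "pref \<nu> t (Suc n) = pref \<nu> t n @ [\<not> (t < Aend \<nu> (pref \<nu> t n) + \<nu> (pref \<nu> t n @ [False]))]"

lemma length_pref[simp]: "length (pref \<nu> t n) = n" by (induction n) auto

lemma pref_nth: "i < n \<Longrightarrow> pref \<nu> t n ! i = pref \<nu> t (Suc i) ! i"
proof (induction n)
  case (Suc n)
  then show ?case by (cases "i = n") (auto simp: nth_append)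
qed simp

definition qmap :: "(bool list \<Rightarrow> real) \<Rightarrow> real \<Rightarrow> seq" where
  "qmap \<nu> t = (\<lambda>i. pref \<nu> t (Suc i) ! i)"

lemma pref_map: "pref \<nu> t n = map (qmap \<nu> t) [0..<n]"
  by (rule nth_equalityI) (auto simp: qmap_def pref_nth)

locale cylw =
  fixes \<nu> :: "bool list \<Rightarrow> real"
  assumes nn: "\<And>s. \<nu> s \<ge> 0"
    and one: "\<nu> [] = 1"
    and add: "\<And>s. \<nu> s = \<nu> (s @ [False]) + \<nu> (s @ [True])"
begin

lemma interval_bounds: "0 \<le> Aend \<nu> s \<and> Aend \<nu> s + \<nu> s \<le> 1"
proof (induction s rule: rev_induct)
  case Nil then show ?case by (simp add: one)
next
  case (snoc b s)
  then show ?case using add[of s] nn[of "s @ [False]"] nn[of "s @ [True]"]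
    by (cases b) (auto simp: Aend_snoc)
qed

lemma pref_in: "0 \<le> t \<Longrightarrow> t < 1 \<Longrightarrow> Aend \<nu> (pref \<nu> t n) \<le> t \<and> t < Aend \<nu> (pref \<nu> t n) + \<nu> (pref \<nu> t n)"
proof (induction n)
  case 0 then show ?case by (simp add: one)
next
  case (Suc n)
  let ?s = "pref \<nu> t n"
  show ?case using Suc add[of ?s] by (auto simp: Aend_snoc)
qed

lemma interval_unique:
  "length s = length s' \<Longrightarrow> Aend \<nu> s \<le> t \<Longrightarrow> t < Aend \<nu> s + \<nu> s \<Longrightarrow>
   Aend \<nu> s' \<le> t \<Longrightarrow> t < Aend \<nu> s' + \<nu> s' \<Longrightarrow> s = s'"
proof (induction s arbitrary: s' rule: rev_induct)
  case Nil then show ?case by simp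
next
  case (snoc b s)
  obtain s0 b' where s': "s' = s0 @ [b']" using snoc.prems(1)
    by (metis length_append_singleton rev_exhaust list.size(3) nat.distinct(1))
  have len: "length s = length s0" using snoc.prems(1) s' by simp
  have i1: "Aend \<nu> s \<le> t \<and> t < Aend \<nu> s + \<nu> s"
    using snoc.prems(2,3) add[of s] nn[of "s @ [False]"] nn[of "s @ [True]"]
    by (cases b) (auto simp: Aend_snoc)
  have i2: "Aend \<nu> s0 \<le> t \<and> t < Aend \<nu> s0 + \<nu> s0"
    using snoc.prems(4,5) add[of s0] nn[of "s0 @ [False]"] nn[of "s0 @ [True]"] s'
    by (cases b') (auto simp: Aend_snoc)
  have "s = s0" using snoc.IH[OF len] i1 i2 by blast
  moreover have "b = b'"
    using snoc.prems(2-5) s' \<open>s = s0\<close> by (cases b; cases b') (auto simp: Aend_snoc)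
  ultimately show ?case using s' by simp
qed

lemma pref_iff:
  assumes "0 \<le> t" "t < 1"
  shows "pref \<nu> t (length s) = s \<longleftrightarrow> Aend \<nu> s \<le> t \<and> t < Aend \<nu> s + \<nu> s"
  using pref_in[OF assms, of "length s"] interval_unique[of "pref \<nu> t (length s)" s t] by auto

definition M0 :: "real measure" where "M0 = restrict_space lborel {0..<1}"

lemma space_M0[simp]: "space M0 = {0..<1}" unfolding M0_def by simp

lemma pref_meas: "(\<lambda>t. pref \<nu> t n) \<in> measurable M0 (count_space UNIV)"
proof (subst measurable_count_space_eq_countable)
  show "countable (UNIV :: bool list set)" by simp
  show "(\<lambda>t. pref \<nu> t n) \<in> space M0 \<rightarrow> UNIV \<and>
    (\<forall>a\<in>UNIV. (\<lambda>t. pref \<nu> t n) -` {a} \<inter> space M0 \<in> sets M0)"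
  proof (intro conjI ballI)
    fix a :: "bool list"
    show "(\<lambda>t. pref \<nu> t n) -` {a} \<inter> space M0 \<in> sets M0"
    proof (cases "length a = n")
      case True
      then have "(\<lambda>t. pref \<nu> t n) -` {a} \<inter> space M0 = {0..<1} \<inter> {Aend \<nu> a..<Aend \<nu> a + \<nu> a}"
        using pref_iff[of _ a] by auto
      moreover have "{0..<1} \<inter> {Aend \<nu> a..<Aend \<nu> a + \<nu> a} \<in> sets M0"
        unfolding M0_def sets_restrict_space by (rule imageI) simp
      ultimately show ?thesis by simp
    next
      case False
      then have "(\<lambda>t. pref \<nu> t n) -` {a} \<inter> space M0 = {}" by auto
      then show ?thesis by simp
    qed
  qed simp
qed

lemma qmap_meas: "qmap \<nu> \<in> measurable M0 SigmaM"
proof -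
  have "(\<lambda>t i. qmap \<nu> t i) \<in> measurable M0 (Pi\<^sub>M UNIV (\<lambda>_. count_space UNIV))"
  proof (rule measurable_PiM_single')
    fix i :: nat
    have "(\<lambda>t. (\<lambda>s. s ! i) (pref \<nu> t (Suc i))) \<in> measurable M0 (count_space UNIV)"
      by (rule measurable_compose[OF pref_meas measurable_count_space])
    then show "(\<lambda>t. qmap \<nu> t i) \<in> measurable M0 (count_space UNIV)" unfolding qmap_def .
  qed (simp add: PiE_def extensional_def)
  then show ?thesis unfolding SigmaM_def by simp
qed

definition mu :: "seq measure" where "mu = distr M0 SigmaM (qmap \<nu>)"

lemma sets_mu[simp]: "sets mu = sets SigmaM" unfolding mu_def by simp

lemma emeasure_mu_cyl: "emeasure mu (cyl s) = ennreal (\<nu> s)"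
proof -
  have "emeasure mu (cyl s) = emeasure M0 (qmap \<nu> -` cyl s \<inter> space M0)"
    unfolding mu_def by (rule emeasure_distr[OF qmap_meas cyl_sets])
  also have "qmap \<nu> -` cyl s \<inter> space M0 = {Aend \<nu> s..<Aend \<nu> s + \<nu> s}"
  proof -
    have "qmap \<nu> t \<in> cyl s \<longleftrightarrow> pref \<nu> t (length s) = s" for t
      using map_eq_cyl[of "qmap \<nu> t" "length s" s] pref_map[of \<nu> t "length s"] by auto
    moreover have "t \<in> space M0 \<Longrightarrow> pref \<nu> t (length s) = s \<longleftrightarrow> t \<in> {Aend \<nu> s..<Aend \<nu> s + \<nu> s}" for t
      using pref_iff[of t s] by simp
    moreover have "{Aend \<nu> s..<Aend \<nu> s + \<nu> s} \<subseteq> space M0"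
      using interval_bounds[of s] by auto
    ultimately show ?thesis by blast
  qed
  also have "emeasure M0 {Aend \<nu> s..<Aend \<nu> s + \<nu> s} = emeasure lborel {Aend \<nu> s..<Aend \<nu> s + \<nu> s}"
  proof -
    have "{0..<1::real} \<inter> space lborel \<in> sets lborel" by simp
    moreover have "{Aend \<nu> s..<Aend \<nu> s + \<nu> s} \<subseteq> {0..<1}" using interval_bounds[of s] by auto
    ultimately show ?thesis unfolding M0_def by (rule emeasure_restrict_space)
  qed
  also have "\<dots> = ennreal (\<nu> s)" using nn[of s] emeasure_lborel_Ico[of "Aend \<nu> s" "Aend \<nu> s + \<nu> s"] by simp
  finally show ?thesis .
qed

lemma prob_mu: "prob_space mu"
proof -
  have "prob_space M0"
  proof (rule prob_spaceI)
    have "emeasure M0 {0..<1} = emeasure lborel {0..<1::real}"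
      unfolding M0_def by (rule emeasure_restrict_space) simp_all
    then show "emeasure M0 (space M0) = 1" by simp
  qed
  then show ?thesis unfolding mu_def by (rule prob_space.prob_space_distr[OF _ qmap_meas])
qed

end

lemma exists_measure:
  assumes "\<And>s. \<nu> s \<ge> 0" "\<nu> [] = 1" "\<And>s. \<nu> s = \<nu> (s @ [False]) + \<nu> (s @ [True])"
  shows "\<exists>\<mu>. sets \<mu> = sets SigmaM \<and> prob_space \<mu> \<and> (\<forall>s. emeasure \<mu> (cyl s) = ennreal (\<nu> s))"
proof -
  interpret cylw \<nu> using assms by (unfold_locales; blast)
  show ?thesis using sets_mu prob_mu emeasure_mu_cyl by blast
qed


definition fr :: "(nat \<Rightarrow> seq) \<Rightarrow> nat \<Rightarrow> bool list \<Rightarrow> real" where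
  "fr v N s = (\<Sum>j\<le>N. if v j \<in> cyl s then 1 else 0) / real (Suc N)"

lemma fr_bounds: "0 \<le> fr v N s \<and> fr v N s \<le> 1"
proof -
  have "(\<Sum>j\<le>N. if v j \<in> cyl s then 1 else (0::real)) \<le> (\<Sum>j\<le>N. 1)"
    by (intro sum_mono) simp
  then have "(\<Sum>j\<le>N. if v j \<in> cyl s then 1 else (0::real)) \<le> real (Suc N)" by simp
  moreover have "(\<Sum>j\<le>N. if v j \<in> cyl s then 1 else (0::real)) \<ge> 0" by (intro sum_nonneg) simp
  ultimately show ?thesis unfolding fr_def by (simp add: divide_le_eq_1)
qed


lemma cyl_snoc: "cyl s = cyl (s @ [False]) \<union> cyl (s @ [True])"
proof (intro set_eqI iffI)
  fix x assume x: "x \<in> cyl s"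
  have "x \<in> cyl (s @ [x (length s)])"
    using x unfolding cyl_def by (simp add: nth_append less_Suc_eq)
  then show "x \<in> cyl (s @ [False]) \<union> cyl (s @ [True])" by (cases "x (length s)") simp_all
next
  fix x assume "x \<in> cyl (s @ [False]) \<union> cyl (s @ [True])"
  then obtain b where "x \<in> cyl (s @ [b])" by blast
  then show "x \<in> cyl s" unfolding cyl_def by (simp add: nth_append)
qed

lemma cyl_snoc_disj: "cyl (s @ [False]) \<inter> cyl (s @ [True]) = {}"
proof -
  have "x \<in> cyl (s @ [b]) \<Longrightarrow> x (length s) = b" for x b
  proof -
    assume "x \<in> cyl (s @ [b])"
    then have "\<forall>i<length (s @ [b]). x i = (s @ [b]) ! i" unfolding cyl_def by simp
    then have "x (length s) = (s @ [b]) ! length s" by simp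
    then show ?thesis by simp
  qed
  then show ?thesis by blast
qed

lemma cyl_cons: "shift -` cyl s = cyl (False # s) \<union> cyl (True # s)"
proof (intro set_eqI iffI)
  fix x assume x: "x \<in> shift -` cyl s"
  have xs: "\<forall>i<length s. x (Suc i) = s ! i" using x unfolding cyl_def shift_def by simp
  have "x \<in> cyl (x 0 # s)"
    unfolding cyl_def
  proof (intro CollectI allI impI)
    fix i assume "i < length (x 0 # s)"
    then show "x i = (x 0 # s) ! i" using xs by (cases i) simp_all
  qed
  then show "x \<in> cyl (False # s) \<union> cyl (True # s)" by (cases "x 0") simp_all
next
  fix x assume "x \<in> cyl (False # s) \<union> cyl (True # s)"
  then obtain b where b: "x \<in> cyl (b # s)" by blast
  have "\<forall>i<length s. x (Suc i) = s ! i"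
  proof (intro allI impI)
    fix i assume "i < length s"
    moreover have "\<forall>i<length (b # s). x i = (b # s) ! i" using b unfolding cyl_def by simp
    ultimately show "x (Suc i) = s ! i" by (metis Suc_less_eq length_Cons nth_Cons_Suc)
  qed
  then show "x \<in> shift -` cyl s" unfolding cyl_def shift_def by simp
qed

lemma cyl_cons_disj: "cyl (False # s) \<inter> cyl (True # s) = {}"
proof -
  have "x \<in> cyl (b # s) \<Longrightarrow> x 0 = b" for x b
  proof -
    assume "x \<in> cyl (b # s)"
    then have "\<forall>i<length (b # s). x i = (b # s) ! i" unfolding cyl_def by simp
    then have "x 0 = (b # s) ! 0" by simp
    then show ?thesis by simp
  qed
  then show ?thesis by blast
qed

lemma fr_add: "fr v N s = fr v N (s @ [False]) + fr v N (s @ [True])"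
proof -
  have "(if v j \<in> cyl s then 1 else (0::real)) =
        (if v j \<in> cyl (s @ [False]) then 1 else 0) + (if v j \<in> cyl (s @ [True]) then 1 else 0)" for j
    using cyl_snoc[of s] cyl_snoc_disj[of s] by auto
  then show ?thesis unfolding fr_def by (simp add: sum.distrib add_divide_distrib)
qed

lemma fr_shift:
  assumes orb: "\<And>j. v (Suc j) = shift (v j)"
  shows "\<bar>fr v N s - (fr v N (False # s) + fr v N (True # s))\<bar> \<le> 1 / real (Suc N)"
proof -
  define g where "g j = (if v j \<in> cyl s then 1 else (0::real))" for j
  have e: "(if v j \<in> cyl (False # s) then 1 else (0::real)) + (if v j \<in> cyl (True # s) then 1 else 0) = g (Suc j)" for j
    using cyl_cons[of s] cyl_cons_disj[of s] orb[of j] unfolding g_def by auto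
  have "fr v N (False # s) + fr v N (True # s) = (\<Sum>j\<le>N. g (Suc j)) / real (Suc N)"
    unfolding fr_def by (simp add: add_divide_distrib[symmetric] sum.distrib[symmetric] e)
  moreover have "fr v N s = (\<Sum>j\<le>N. g j) / real (Suc N)" unfolding fr_def g_def by simp
  moreover have "(\<Sum>j\<le>N. g (Suc j)) - (\<Sum>j\<le>N. g j) = g (Suc N) - g 0"
    by (induction N) auto
  moreover have "\<bar>g (Suc N) - g 0\<bar> \<le> 1" unfolding g_def by auto
  ultimately have "\<bar>fr v N s - (fr v N (False # s) + fr v N (True # s))\<bar> = \<bar>g (Suc N) - g 0\<bar> / real (Suc N)"
    by (simp add: diff_divide_distrib[symmetric] abs_minus_commute)
  also have "\<dots> \<le> 1 / real (Suc N)"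
    by (rule divide_right_mono) (use \<open>\<bar>g (Suc N) - g 0\<bar> \<le> 1\<close> in auto)
  finally show ?thesis .
qed

lemma fr_zero:
  assumes J: "\<And>j. j \<ge> J \<Longrightarrow> v j \<notin> cyl s"
  shows "fr v N s \<le> real J / real (Suc N)"
proof -
  have "(\<Sum>j\<le>N. if v j \<in> cyl s then 1 else (0::real)) \<le> (\<Sum>j\<le>N. if j < J then 1 else 0)"
    by (intro sum_mono) (use J in \<open>auto simp: not_less\<close>)
  also have "\<dots> = real (card {j. j \<le> N \<and> j < J})"
    by (simp add: sum.If_cases Int_def conj_commute)
  also have "\<dots> \<le> real J"
  proof -
    have "{j. j \<le> N \<and> j < J} \<subseteq> {..<J}" by auto
    then have "card {j. j \<le> N \<and> j < J} \<le> card {..<J}" by (intro card_mono) auto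
    then show ?thesis by simp
  qed
  finally show ?thesis unfolding fr_def by (simp add: divide_right_mono)
qed

lemma orbit_measure:
  assumes orb: "\<And>j. v (Suc j) = shift (v j)"
  shows "\<exists>\<mu>. invariant_prob \<mu> \<and> (\<forall>s. (\<exists>J. \<forall>j\<ge>J. v j \<notin> cyl s) \<longrightarrow> emeasure \<mu> (cyl s) = 0)"
proof -
  define E where "E N k = fr v N (from_nat k)" for N k
  have "\<And>N k. \<bar>E N k\<bar> \<le> 1" unfolding E_def using fr_bounds by (simp add: abs_le_iff)
  then obtain r l where r: "strict_mono r" and l: "\<And>k. (\<lambda>N. E (r N) k) \<longlonglongrightarrow> l k"
    using diag_subseq by blast
  define \<nu> where "\<nu> s = l (to_nat s)" for s :: "bool list"
  have lim: "(\<lambda>N. fr v (r N) s) \<longlonglongrightarrow> \<nu> s" for s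
    using l[of "to_nat s"] unfolding E_def \<nu>_def by simp
  have inv0: "(\<lambda>N. 1 / real (Suc (r N))) \<longlonglongrightarrow> 0"
  proof -
    have "(\<lambda>N. 1 / real (Suc N)) \<longlonglongrightarrow> 0" by (rule LIMSEQ_Suc[OF lim_const_over_n[of 1]]) 
    then show ?thesis using LIMSEQ_subseq_LIMSEQ[OF _ r] by (simp add: o_def)
  qed
  have nn: "\<nu> s \<ge> 0" for s
    by (rule LIMSEQ_le_const[OF lim[of s]]) (use fr_bounds in auto)
  have one: "\<nu> [] = 1"
  proof -
    have "fr v N [] = 1" for N unfolding fr_def cyl_def by simp
    then show ?thesis using lim[of "[]"] LIMSEQ_unique by (simp add: LIMSEQ_const_iff)
  qed
  have add: "\<nu> s = \<nu> (s @ [False]) + \<nu> (s @ [True])" for s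
  proof -
    have "(\<lambda>N. fr v (r N) (s @ [False]) + fr v (r N) (s @ [True])) \<longlonglongrightarrow> \<nu> (s @ [False]) + \<nu> (s @ [True])"
      by (intro tendsto_add lim)
    then show ?thesis using lim[of s] LIMSEQ_unique by (simp add: fr_add[symmetric])
  qed
  have shiftp: "\<nu> s = \<nu> (False # s) + \<nu> (True # s)" for s
  proof -
    have a: "(\<lambda>N. fr v (r N) s - (fr v (r N) (False # s) + fr v (r N) (True # s)))
       \<longlonglongrightarrow> \<nu> s - (\<nu> (False # s) + \<nu> (True # s))"
      by (intro tendsto_diff tendsto_add lim)
    have b: "(\<lambda>N. fr v (r N) s - (fr v (r N) (False # s) + fr v (r N) (True # s))) \<longlonglongrightarrow> 0"
    proof (rule tendsto_sandwich[of "\<lambda>N. - (1 / real (Suc (r N)))" _ _ "\<lambda>N. 1 / real (Suc (r N))"])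
      show "\<forall>\<^sub>F n in sequentially. - (1 / real (Suc (r n))) \<le> fr v (r n) s - (fr v (r n) (False # s) + fr v (r n) (True # s))"
        using fr_shift[of v, OF orb] by (intro always_eventually allI) (simp add: abs_le_iff, smt (verit))
      show "\<forall>\<^sub>F n in sequentially. fr v (r n) s - (fr v (r n) (False # s) + fr v (r n) (True # s)) \<le> 1 / real (Suc (r n))"
        using fr_shift[of v, OF orb] by (intro always_eventually allI) (simp add: abs_le_iff)
      show "(\<lambda>N. - (1 / real (Suc (r N)))) \<longlonglongrightarrow> 0" using tendsto_minus[OF inv0] by simp
      show "(\<lambda>N. 1 / real (Suc (r N))) \<longlonglongrightarrow> 0" by (rule inv0)
    qed
    show ?thesis using LIMSEQ_unique[OF a b] by simp
  qed
  have zero: "\<nu> s = 0" if J: "\<forall>j\<ge>J. v j \<notin> cyl s" for s J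
  proof -
    have "(\<lambda>N. real J * (1 / real (Suc (r N)))) \<longlonglongrightarrow> real J * 0" by (intro tendsto_mult inv0 tendsto_const)
    then have "(\<lambda>N. real J / real (Suc (r N))) \<longlonglongrightarrow> 0" by simp
    then have "\<nu> s \<le> 0"
      by (rule LIMSEQ_le[OF lim]) (use fr_zero J in auto)
    then show ?thesis using nn[of s] by simp
  qed
  obtain \<mu> where s\<mu>: "sets \<mu> = sets SigmaM" and p\<mu>: "prob_space \<mu>"
    and c\<mu>: "\<And>s. emeasure \<mu> (cyl s) = ennreal (\<nu> s)"
    using exists_measure[of \<nu>, OF nn one add] by blast
  have meas: "shift \<in> measurable \<mu> \<mu>"
    using shift_meas measurable_cong_sets[OF s\<mu> s\<mu>] by blast
  have "distr \<mu> \<mu> shift = \<mu>"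
  proof (rule measure_eq_cyl)
    show "sets (distr \<mu> \<mu> shift) = sets SigmaM" using s\<mu> by simp
    show "sets \<mu> = sets SigmaM" by (rule s\<mu>)
    show "finite_measure (distr \<mu> \<mu> shift)"
      using prob_space.prob_space_distr[OF p\<mu> meas] prob_space.finite_measure by blast
    fix s
    have cs: "cyl s \<in> sets \<mu>" using s\<mu> cyl_sets by simp
    have sp: "space \<mu> = UNIV" using sets_eq_imp_space_eq[OF s\<mu>] by simp
    have "emeasure (distr \<mu> \<mu> shift) (cyl s) = emeasure \<mu> (shift -` cyl s \<inter> space \<mu>)"
      by (rule emeasure_distr[OF meas cs])
    also have "\<dots> = emeasure \<mu> (cyl (False # s) \<union> cyl (True # s))" using sp cyl_cons[of s] by simp
    also have "\<dots> = emeasure \<mu> (cyl (False # s)) + emeasure \<mu> (cyl (True # s))"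
    proof (rule plus_emeasure[symmetric])
      show "cyl (False # s) \<in> sets \<mu>" "cyl (True # s) \<in> sets \<mu>" using s\<mu> cyl_sets by simp_all
      show "cyl (False # s) \<inter> cyl (True # s) = {}" by (rule cyl_cons_disj)
    qed
    also have "\<dots> = ennreal (\<nu> s)" using c\<mu> shiftp[of s] nn by (simp add: ennreal_plus)
    finally show "emeasure (distr \<mu> \<mu> shift) (cyl s) = emeasure \<mu> (cyl s)" using c\<mu> by simp
  qed
  then have "invariant_prob \<mu>" unfolding invariant_prob_def using s\<mu> p\<mu> meas by blast
  moreover have "\<forall>s. (\<exists>J. \<forall>j\<ge>J. v j \<notin> cyl s) \<longrightarrow> emeasure \<mu> (cyl s) = 0"
    using c\<mu> zero by auto
  ultimately show ?thesis by blast
qed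


lemma funpow_shift_apply: "(shift ^^ n) x i = x (i + n)"
  by (induction n arbitrary: i) (auto simp: shift_def)

lemma periodic_mod: "(shift ^^ n0) q = q \<Longrightarrow> n0 > 0 \<Longrightarrow> q i = q (i mod n0)"
proof (induction i rule: less_induct)
  case (less i)
  show ?case
  proof (cases "i < n0")
    case True then show ?thesis by simp
  next
    case False
    then have "q i = q ((i - n0) + n0)" by simp
    also have "\<dots> = (shift ^^ n0) q (i - n0)" by (simp add: funpow_shift_apply)
    also have "\<dots> = q (i - n0)" using less.prems by simp
    also have "\<dots> = q ((i - n0) mod n0)" using less False by simp
    also have "(i - n0) mod n0 = i mod n0" using False by (simp add: le_mod_geq)
    finally show ?thesis .
  qed
qed

lemma periodic_agree_eq:
  assumes "(shift ^^ n0) q = q" "(shift ^^ n0) q' = q'" "n0 > 0" "agree n0 q q'"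
  shows "q = q'"
proof
  fix i
  have "q i = q (i mod n0)" "q' i = q' (i mod n0)" using periodic_mod assms by blast+
  moreover have "i mod n0 < n0" using assms(3) by simp
  ultimately show "q i = q' i" using assms(4) unfolding agree_def by simp
qed

lemma funpow_swap_shift: "(shift ^^ a) ((shift ^^ b) p) = (shift ^^ b) ((shift ^^ a) p)"
  by (metis funpow_add add.commute comp_apply)

context
  fixes M :: "seq set" and p :: seq and n0 :: nat
  assumes n0: "n0 > 0" and per: "(shift ^^ n0) p = p" and Mdef: "M = {(shift ^^ i) p | i. i < n0}"
begin

lemma M_per: "q \<in> M \<Longrightarrow> (shift ^^ n0) q = q"
proof -
  assume "q \<in> M"
  then obtain i where i: "q = (shift ^^ i) p" using Mdef by auto
  have "(shift ^^ n0) ((shift ^^ i) p) = (shift ^^ i) ((shift ^^ n0) p)" by (rule funpow_swap_shift)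
  then show ?thesis using i per by simp
qed

lemma M_shift: "q \<in> M \<Longrightarrow> shift q \<in> M"
proof -
  assume "q \<in> M"
  then obtain i where i: "i < n0" "q = (shift ^^ i) p" using Mdef by auto
  show "shift q \<in> M"
  proof (cases "Suc i = n0")
    case True
    have "shift q = (shift ^^ Suc i) p" using i by simp
    also have "\<dots> = p" using True per by simp
    finally have "shift q = (shift ^^ 0) p" by simp
    then show ?thesis using Mdef n0 by blast
  next
    case False
    then have "shift q = (shift ^^ Suc i) p" "Suc i < n0" using i by auto
    then show ?thesis using Mdef by blast
  qed
qed

lemma M_pre: "q \<in> M \<Longrightarrow> \<exists>q'\<in>M. shift q' = q"
proof -
  assume "q \<in> M"
  then obtain i where i: "i < n0" "q = (shift ^^ i) p" using Mdef by auto
  show ?thesis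
  proof (cases i)
    case 0
    have "shift ((shift ^^ (n0 - 1)) p) = (shift ^^ Suc (n0 - 1)) p" by simp
    also have "Suc (n0 - 1) = n0" using n0 by simp
    finally have "shift ((shift ^^ (n0 - 1)) p) = (shift ^^ n0) p" .
    moreover have "(shift ^^ (n0 - 1)) p \<in> M" using Mdef n0 by auto
    ultimately show ?thesis using i 0 per by auto
  next
    case (Suc j)
    then have "shift ((shift ^^ j) p) = q" "j < n0" using i by auto
    then show ?thesis using Mdef by blast
  qed
qed

lemma M_finite: "finite M"
proof -
  have "M = (\<lambda>i. (shift ^^ i) p) ` {..<n0}" using Mdef by auto
  then show ?thesis by simp
qed

lemma M_agree_eq: "q \<in> M \<Longrightarrow> q' \<in> M \<Longrightarrow> agree n0 q q' \<Longrightarrow> q = q'"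
  using periodic_agree_eq M_per n0 by blast

lemma M_shift_inj: "q \<in> M \<Longrightarrow> q' \<in> M \<Longrightarrow> shift q = shift q' \<Longrightarrow> q = q'"
proof -
  assume a: "q \<in> M" "q' \<in> M" "shift q = shift q'"
  have "agree n0 q q'"
    unfolding agree_def
  proof (intro allI impI)
    fix i assume "i < n0"
    have "q i = q (i + n0)" using M_per[OF a(1)] funpow_shift_apply[of n0 q i] by simp
    also have "\<dots> = q' (i + n0)"
    proof -
      have "q (Suc (i + (n0 - 1))) = shift q (i + (n0 - 1))" by (simp add: shift_def)
      also have "\<dots> = q' (Suc (i + (n0 - 1)))" using a(3) by (simp add: shift_def)
      finally show ?thesis using n0 by simp
    qed
    also have "\<dots> = q' i" using M_per[OF a(2)] funpow_shift_apply[of n0 q' i] by simp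
    finally show "q i = q' i" .
  qed
  then show ?thesis using M_agree_eq a by blast
qed

definition Pset where "Pset = {z. z \<notin> M \<and> shift z \<in> M}"

lemma tau_shift: "tau (\<lambda>_. z 0) (shift z) = z"
  unfolding tau_def shift_def by (auto split: nat.splits)

lemma shift_tau: "shift (tau w x) = x" unfolding tau_def shift_def by simp

lemma P_finite: "finite Pset"
proof -
  have "Pset \<subseteq> (\<lambda>(b, q). tau (\<lambda>_. b) q) ` (UNIV \<times> M)"
  proof
    fix z assume "z \<in> Pset"
    then have "shift z \<in> M" unfolding Pset_def by simp
    show "z \<in> (\<lambda>(b, q). tau (\<lambda>_. b) q) ` (UNIV \<times> M)"
    proof (rule image_eqI)
      show "z = (\<lambda>(b, q). tau (\<lambda>_. b) q) (z 0, shift z)" using tau_shift[of z] by simp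
      show "(z 0, shift z) \<in> UNIV \<times> M" using \<open>shift z \<in> M\<close> by simp
    qed
  qed
  moreover have "finite ((\<lambda>(b, q). tau (\<lambda>_. b) q) ` ((UNIV::bool set) \<times> M))"
    using M_finite by simp
  ultimately show ?thesis by (rule finite_subset)
qed

definition Nb :: "nat \<Rightarrow> seq \<Rightarrow> bool" where "Nb K x \<longleftrightarrow> (\<exists>q\<in>M. agree K x q)"

lemma transition:
  assumes "\<not> Nb (Suc K) x" "Nb (Suc K) (shift x)"
  shows "\<exists>z\<in>Pset. agree (Suc K) z x"
proof -
  obtain q where q: "q \<in> M" "agree (Suc K) (shift x) q" using assms(2) unfolding Nb_def by blast
  obtain q' where q': "q' \<in> M" "shift q' = q" using M_pre[OF q(1)] by blast
  define z where "z = tau (\<lambda>_. x 0) q"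
  have sz: "shift z = q" unfolding z_def by (rule shift_tau)
  have azx: "agree (Suc K) z x"
    unfolding agree_def
  proof (intro allI impI)
    fix i assume i: "i < Suc K"
    show "z i = x i"
    proof (cases i)
      case 0 then show ?thesis by (simp add: z_def tau_def)
    next
      case (Suc j)
      then have "j < Suc K" using i by simp
      then have "shift x j = q j" using q(2) unfolding agree_def by simp
      then show ?thesis using Suc by (simp add: z_def tau_def shift_def)
    qed
  qed
  have "z \<notin> M"
  proof
    assume "z \<in> M"
    then have "z = q'" using M_shift_inj q'(1) sz q'(2) by simp
    then have "Nb (Suc K) x" unfolding Nb_def using q'(1) azx agree_sym by blast
    then show False using assms(1) by simp
  qed
  then have "z \<in> Pset" unfolding Pset_def using sz q(1) by simp
  then show ?thesis using azx by blast
qed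


lemma orbit_funpow: "(\<And>j. u (Suc j) = shift (u j)) \<Longrightarrow> u (J + i) = (shift ^^ i) (u J)"
  by (induction i) auto

lemma escape_or_enter:
  fixes R :: "seq \<Rightarrow> real" and u :: "nat \<Rightarrow> seq"
  assumes Rc: "ccont R"
    and Rpos: "\<And>z. z \<in> Pset \<Longrightarrow> R z > 0"
    and orb: "\<And>j. u (Suc j) = shift (u j)"
    and lim: "(\<lambda>j. R (u j)) \<longlonglongrightarrow> 0"
  shows "(\<exists>J. u J \<in> M) \<or> (\<exists>K j0. \<forall>j\<ge>j0. \<not> Nb K (u j))"
proof -
  have "\<forall>z\<in>Pset. \<exists>L. \<forall>x. agree L z x \<longrightarrow> \<bar>R x - R z\<bar> < R z / 2"
  proof
    fix z assume "z \<in> Pset"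
    then have "R z / 2 > 0" using Rpos by simp
    then show "\<exists>L. \<forall>x. agree L z x \<longrightarrow> \<bar>R x - R z\<bar> < R z / 2" using Rc unfolding ccont_def by blast
  qed
  then obtain Lf where Lf0: "\<forall>z\<in>Pset. \<forall>x. agree (Lf z) z x \<longrightarrow> \<bar>R x - R z\<bar> < R z / 2"
    by (rule bchoice[THEN exE])
  then have Lf: "\<And>z x. z \<in> Pset \<Longrightarrow> agree (Lf z) z x \<Longrightarrow> \<bar>R x - R z\<bar> < R z / 2" by blast
  define L0 where "L0 = Max (insert 0 (Lf ` Pset))"
  define c where "c = Min (insert 1 ((\<lambda>z. R z / 2) ` Pset))"
  have finP: "finite Pset" by (rule P_finite)
  have c_pos: "c > 0" unfolding c_def using finP Rpos by (subst Min_gr_iff) auto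
  have c_le: "z \<in> Pset \<Longrightarrow> c \<le> R z / 2" for z unfolding c_def using finP by (intro Min_le) auto
  have L0_ge: "z \<in> Pset \<Longrightarrow> Lf z \<le> L0" for z unfolding L0_def using finP by (intro Max_ge) auto
  define K' where "K' = max L0 n0"
  define K where "K = Suc K'"
  have trans: "R x \<ge> c" if nb: "\<not> Nb K x" "Nb K (shift x)" for x
  proof -
    obtain z where z: "z \<in> Pset" "agree K z x" using transition[of K' x] nb[unfolded K_def] unfolding K_def by blast
    have "agree (Lf z) z x" using agree_mono[OF z(2)] L0_ge[OF z(1)] unfolding K_def K'_def by simp
    then have "\<bar>R x - R z\<bar> < R z / 2" using Lf z(1) by blast
    then show ?thesis using c_le[OF z(1)] by linarith
  qed
  obtain J where J0: "\<forall>j\<ge>J. norm (R (u j) - 0) < c"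
    using LIMSEQ_D[OF lim c_pos] by blast
  have J: "R (u j) < c" if "j \<ge> J" for j using J0 that by (simp add: abs_less_iff)
  have step: "Nb K (u j)" if "j \<ge> J" "Nb K (u (Suc j))" for j
  proof (rule ccontr)
    assume "\<not> Nb K (u j)"
    then have "R (u j) \<ge> c" using trans[of "u j"] that(2) orb[of j] by simp
    then show False using J[OF that(1)] by simp
  qed
  have down: "j \<ge> J \<Longrightarrow> Nb K (u (j + d)) \<Longrightarrow> Nb K (u j)" for d j
  proof (induction d arbitrary: j)
    case 0 then show ?case by simp
  next
    case (Suc d)
    have "Nb K (u (Suc j + d))" using Suc.prems(2) by simp
    then have "Nb K (u (Suc j))" using Suc.IH[of "Suc j"] Suc.prems(1) by simp
    then show ?case using step Suc.prems(1) by blast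
  qed
  show ?thesis
  proof (cases "\<forall>j0. \<exists>j\<ge>j0. Nb K (u j)")
    case False
    then show ?thesis by blast
  next
    case True
    have allN: "Nb K (u j)" if "j \<ge> J" for j
    proof -
      obtain j' where "j' \<ge> j" "Nb K (u j')" using True by blast
      then show ?thesis using down[of j "j' - j"] that by simp
    qed
    then have "\<forall>j. \<exists>q. j \<ge> J \<longrightarrow> q \<in> M \<and> agree K (u j) q" unfolding Nb_def by blast
    then obtain q where q0: "\<forall>j. j \<ge> J \<longrightarrow> q j \<in> M \<and> agree K (u j) (q j)"
      by (rule choice[THEN exE])
    then have q: "\<And>j. j \<ge> J \<Longrightarrow> q j \<in> M \<and> agree K (u j) (q j)" by blast
    have qrec: "q (Suc j) = shift (q j)" if "j \<ge> J" for j
    proof -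
      have a1: "agree K (u (Suc j)) (q (Suc j))" using q[of "Suc j"] that by simp
      have a2: "agree K' (u (Suc j)) (shift (q j))"
        using agree_shift[of K' "u j" "q j"] q[OF that] orb[of j] unfolding K_def by simp
      have a3: "agree K' (q (Suc j)) (u (Suc j))"
        using agree_mono[OF a1, of K'] unfolding K_def agree_def by auto
      have "agree K' (q (Suc j)) (shift (q j))" by (rule agree_trans[OF a3 a2])
      then have "agree n0 (q (Suc j)) (shift (q j))" by (rule agree_mono) (simp add: K'_def)
      moreover have "q (Suc j) \<in> M" using q[of "Suc j"] that by simp
      moreover have "shift (q j) \<in> M" using M_shift q[OF that] by simp
      ultimately show ?thesis using M_agree_eq by blast
    qed
    have qit: "q (J + i) = (shift ^^ i) (q J)" for i
    proof (induction i)
      case (Suc i)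
      then show ?case using qrec[of "J + i"] by simp
    qed simp
    have "u J = q J"
    proof
      fix i
      have "u J i = (shift ^^ i) (u J) 0" by (simp add: funpow_shift_apply)
      also have "\<dots> = u (J + i) 0" using orbit_funpow[of u J i] orb by simp
      also have "\<dots> = q (J + i) 0" using q[of "J + i"] unfolding agree_def K_def by simp
      also have "\<dots> = q J i" using qit[of i] by (simp add: funpow_shift_apply)
      finally show "u J i = q J i" .
    qed
    then have "u J \<in> M" using q[of J] by simp
    then show ?thesis by blast
  qed
qed

end


lemma finite_words: "finite {s::bool list. length s = L \<and> P s}"
proof -
  have "finite {xs. set xs \<subseteq> (UNIV::bool set) \<and> length xs = L}"
    by (rule finite_lists_length_eq) simp
  then show ?thesis by (rule rev_finite_subset) blast
qed

lemma escape_impossible: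
  fixes Vs R As :: "seq \<Rightarrow> real" and v :: "nat \<Rightarrow> seq" and M :: "seq set"
  assumes Vsc: "ccont Vs" and Rc: "ccont R"
    and Rnn: "\<And>x. R x \<ge> 0"
    and Asd: "\<And>x. As x = Vs (shift x) - Vs x - R x"
    and mAs: "mval As = 0"
    and Msupp: "\<And>\<mu>. maximizing As \<mu> \<Longrightarrow> emeasure \<mu> M = 1"
    and Mfin: "finite M"
    and orb: "\<And>j. v (Suc j) = shift (v j)"
    and lim: "(\<lambda>j. R (v j)) \<longlonglongrightarrow> 0"
    and away: "\<And>j q. j \<ge> j0 \<Longrightarrow> q \<in> M \<Longrightarrow> \<not> agree K (v j) q"
  shows False
proof -
  obtain \<mu> where inv: "invariant_prob \<mu>"
    and zero: "\<And>s. (\<exists>J. \<forall>j\<ge>J. v j \<notin> cyl s) \<Longrightarrow> emeasure \<mu> (cyl s) = 0"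
    using orbit_measure[of v, OF orb] by blast
  have s\<mu>: "sets \<mu> = sets SigmaM" and p\<mu>: "prob_space \<mu>" and sh: "shift \<in> measurable \<mu> \<mu>"
    and dis: "distr \<mu> \<mu> shift = \<mu>"
    using inv unfolding invariant_prob_def by auto
  have sp: "space \<mu> = UNIV" using sets_eq_imp_space_eq[OF s\<mu>] by simp
  have meas: "f \<in> borel_measurable \<mu>" if "ccont f" for f
    using ccont_meas[OF that] measurable_cong_sets[OF s\<mu> refl] by blast
  have nullc: "cyl s \<in> null_sets \<mu>" if "\<exists>J. \<forall>j\<ge>J. v j \<notin> cyl s" for s
    using zero[OF that] cyl_sets[of s] s\<mu> by (simp add: null_sets_def)
  have nullW: "(\<Union>s\<in>W. cyl s) \<in> null_sets \<mu>" if "finite W" "\<And>s. s \<in> W \<Longrightarrow> \<exists>J. \<forall>j\<ge>J. v j \<notin> cyl s" for W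
    by (rule null_sets_UN') (use that nullc countable_finite in auto)
  have M0: "emeasure \<mu> M = 0"
  proof -
    let ?W = "(\<lambda>q. map q [0..<K]) ` M"
    have Wn: "(\<Union>s\<in>?W. cyl s) \<in> null_sets \<mu>"
    proof (rule nullW)
      show "finite ?W" using Mfin by simp
      fix s assume "s \<in> ?W"
      then obtain q where q: "q \<in> M" "s = map q [0..<K]" by blast
      have "v j \<notin> cyl s" if "j \<ge> j0" for j
      proof
        assume "v j \<in> cyl s"
        then have "map (v j) [0..<K] = s" using map_eq_cyl[of "v j" K s] q(2) by simp
        then have "agree K (v j) q" using q(2) unfolding agree_def by (simp add: map_eq_conv)
        then show False using away[OF that q(1)] by simp
      qed
      then show "\<exists>J. \<forall>j\<ge>J. v j \<notin> cyl s" by blast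
    qed
    have sub: "M \<subseteq> (\<Union>s\<in>?W. cyl s)"
    proof
      fix q assume "q \<in> M"
      moreover have "q \<in> cyl (map q [0..<K])" unfolding cyl_def by simp
      ultimately show "q \<in> (\<Union>s\<in>?W. cyl s)" by blast
    qed
    have "emeasure \<mu> M \<le> emeasure \<mu> (\<Union>s\<in>?W. cyl s)"
      by (rule emeasure_mono[OF sub]) (use Wn in \<open>simp add: null_sets_def\<close>)
    then show ?thesis using Wn by (simp add: null_sets_def)
  qed
  have "\<forall>k. \<exists>L. \<forall>x y. agree L x y \<longrightarrow> \<bar>R x - R y\<bar> < inverse (real (Suc k)) / 2"
  proof
    fix k :: nat
    have "inverse (real (Suc k)) / 2 > 0" by simp
    then show "\<exists>L. \<forall>x y. agree L x y \<longrightarrow> \<bar>R x - R y\<bar> < inverse (real (Suc k)) / 2"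
      by (rule ccont_unif[OF Rc])
  qed
  then obtain Lk where Lk0: "\<forall>k. \<forall>x y. agree (Lk k) x y \<longrightarrow> \<bar>R x - R y\<bar> < inverse (real (Suc k)) / 2"
    by (rule choice[THEN exE])
  then have Lk: "\<And>k x y. agree (Lk k) x y \<Longrightarrow> \<bar>R x - R y\<bar> < inverse (real (Suc k)) / 2" by blast
  define Wk where "Wk k = {s. length s = Lk k \<and> (\<exists>y\<in>cyl s. R y \<ge> inverse (real (Suc k)))}" for k
  define N where "N = (\<Union>k. \<Union>s\<in>Wk k. cyl s)"
  have Nnull: "N \<in> null_sets \<mu>"
    unfolding N_def
  proof (rule null_sets_UN)
    fix k
    show "(\<Union>s\<in>Wk k. cyl s) \<in> null_sets \<mu>"
    proof (rule nullW)
      show "finite (Wk k)" unfolding Wk_def by (rule finite_words)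
      fix s assume s: "s \<in> Wk k"
      then obtain y where y: "y \<in> cyl s" "R y \<ge> inverse (real (Suc k))" and ls: "length s = Lk k"
        unfolding Wk_def by blast
      have pos: "inverse (real (Suc k)) / 2 > 0" by simp
      obtain J where J0: "\<forall>j\<ge>J. norm (R (v j) - 0) < inverse (real (Suc k)) / 2"
        using LIMSEQ_D[OF lim pos] by blast
      have "v j \<notin> cyl s" if "j \<ge> J" for j
      proof
        assume vj: "v j \<in> cyl s"
        have "agree (Lk k) y (v j)" using vj y(1) ls unfolding cyl_def agree_def by simp
        then have "\<bar>R y - R (v j)\<bar> < inverse (real (Suc k)) / 2" by (rule Lk)
        moreover have "\<bar>R (v j)\<bar> < inverse (real (Suc k)) / 2" using J0 that by simp
        ultimately show False using y(2) by linarith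
      qed
      then show "\<exists>J. \<forall>j\<ge>J. v j \<notin> cyl s" by blast
    qed
  qed
  have AER: "AE x in \<mu>. R x = 0"
  proof (rule AE_I'[OF Nnull])
    show "{x \<in> space \<mu>. \<not> R x = 0} \<subseteq> N"
    proof
      fix x assume "x \<in> {x \<in> space \<mu>. \<not> R x = 0}"
      then have Rx: "R x \<noteq> 0" by simp
      have "R x \<ge> 0" by (rule Rnn)
      then have "R x > 0" using Rx by simp
      then obtain k where k: "inverse (real (Suc k)) < R x" using reals_Archimedean by blast
      have "map x [0..<Lk k] \<in> Wk k"
        unfolding Wk_def using k by (auto simp: cyl_def intro!: bexI[of _ x])
      moreover have "x \<in> cyl (map x [0..<Lk k])" unfolding cyl_def by simp
      ultimately show "x \<in> N" unfolding N_def by blast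
    qed
  qed
  interpret P: prob_space \<mu> by (rule p\<mu>)
  have intg: "integrable \<mu> f" if cf: "ccont f" for f
  proof -
    obtain B where B: "\<And>x. \<bar>f x\<bar> \<le> B" using ccont_bounded[OF cf] by blast
    show ?thesis by (rule P.integrable_const_bound[where B=B]) (use B meas[OF cf] in auto)
  qed
  have Vsh: "ccont (\<lambda>x. Vs (shift x))" by (rule ccont_shift[OF Vsc])
  have i1: "integral\<^sup>L \<mu> (\<lambda>x. Vs (shift x)) = integral\<^sup>L \<mu> Vs"
  proof -
    have "integral\<^sup>L (distr \<mu> \<mu> shift) Vs = integral\<^sup>L \<mu> (\<lambda>x. Vs (shift x))"
      by (rule integral_distr[OF sh meas[OF Vsc]])
    then show ?thesis using dis by simp
  qed
  have i2: "integral\<^sup>L \<mu> R = 0"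
  proof -
    have "integral\<^sup>L \<mu> R = integral\<^sup>L \<mu> (\<lambda>_. 0::real)"
      by (rule integral_cong_AE[OF meas[OF Rc] _ AER]) simp
    then show ?thesis by simp
  qed
  have "integral\<^sup>L \<mu> As = integral\<^sup>L \<mu> (\<lambda>x. (Vs (shift x) - Vs x) - R x)"
  proof -
    have "As = (\<lambda>x. (Vs (shift x) - Vs x) - R x)" using Asd by (rule ext)
    then show ?thesis by simp
  qed
  also have "\<dots> = integral\<^sup>L \<mu> (\<lambda>x. Vs (shift x) - Vs x) - integral\<^sup>L \<mu> R"
    by (rule Bochner_Integration.integral_diff) (intro Bochner_Integration.integrable_diff intg Vsh Vsc Rc, rule intg[OF Rc])
  also have "integral\<^sup>L \<mu> (\<lambda>x. Vs (shift x) - Vs x) = integral\<^sup>L \<mu> (\<lambda>x. Vs (shift x)) - integral\<^sup>L \<mu> Vs"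
    by (rule Bochner_Integration.integral_diff) (rule intg[OF Vsh], rule intg[OF Vsc])
  finally have "integral\<^sup>L \<mu> As = 0" using i1 i2 by simp
  then have "maximizing As \<mu>" unfolding maximizing_def using inv mAs by simp
  then have "emeasure \<mu> M = 1" by (rule Msupp)
  then show False using M0 by simp
qed


theorem mainTheorem6:
  fixes A As V Vs :: "seq \<Rightarrow> real" and W :: "seq \<Rightarrow> seq \<Rightarrow> real"
    and M :: "seq set" and x wx :: seq
  assumes A_holder: "holder A"
    and W_cont: "cont_seq2 W"
    and kernel: "\<And>w y. As w = A (tau w y) + W (shift w) (tau w y) - W w y"
    and mA: "mval A = 0" and mAs: "mval As = 0"
    and V_cal: "calibrated_subaction A V" and V_cont: "cont_seq V"
    and Vs_cal: "calibrated_subaction As Vs" and Vs_cont: "cont_seq Vs"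
    and V_sup: "\<And>y. ereal (V y) = (SUP w. ereal (W w y - Vs w) - I_star Vs As w)"
    and unique_max: "\<exists>!\<mu>. maximizing As \<mu>"
    and M_orbit: "periodic_orbit M"
    and M_supp: "\<And>\<mu>. maximizing As \<mu> \<Longrightarrow> emeasure \<mu> M = 1"
    and good: "\<And>w. w \<notin> M \<Longrightarrow> shift w \<in> M \<Longrightarrow> R_star Vs As w > 0"
    and opt: "optimal_pair V Vs As W x wx"
  shows "(\<exists>k. (shift ^^ k) wx \<in> M) \<and>
         (\<forall>k. (shift ^^ k) wx \<in> M \<longrightarrow>
              optimal_pair V Vs As W (fst ((hatTinv ^^ k) (x, wx))) (snd ((hatTinv ^^ k) (x, wx))))"
proof
  show "\<forall>k. (shift ^^ k) wx \<in> M \<longrightarrow>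
              optimal_pair V Vs As W (fst ((hatTinv ^^ k) (x, wx))) (snd ((hatTinv ^^ k) (x, wx)))"
    using opt_iter[OF Vs_cal V_cal kernel V_sup opt] by blast
  define R where "R = R_star Vs As"
  define u where "u j = (shift ^^ j) wx" for j
  have orb: "\<And>j. u (Suc j) = shift (u j)" unfolding u_def by simp
  have b0: "ereal (V x + Vs wx - W wx x) + I_star Vs As wx = 0"
    using opt unfolding optimal_pair_def b_fun_def .
  then obtain c where c: "I_star Vs As wx = ereal c"
    by (cases "I_star Vs As wx") auto
  have summ: "summable (\<lambda>n. R (u n))" using I_star_finite[OF Vs_cal c] unfolding R_def u_def by simp
  have lim: "(\<lambda>j. R (u j)) \<longlonglongrightarrow> 0" by (rule summable_LIMSEQ_zero[OF summ])
  have Vsc: "ccont Vs" by (rule cont_seq_ccont[OF Vs_cont])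
  have Asc: "ccont As" by (rule As_ccont[OF W_cont kernel])
  have Rc: "ccont R" unfolding R_def by (rule Rs_ccont[OF Vsc Asc])
  have Rnn: "\<And>x. R x \<ge> 0" unfolding R_def by (rule Rs_nonneg[OF Vs_cal])
  have Asd: "\<And>x. As x = Vs (shift x) - Vs x - R x" unfolding R_def R_star_def by simp
  obtain p n0 where n0: "n0 > 0" and per: "(shift ^^ n0) p = p" and Mdef: "M = {(shift ^^ i) p | i. i < n0}"
    using M_orbit unfolding periodic_orbit_def by blast
  have Mfin: "finite M" by (rule M_finite[OF n0 per Mdef])
  have disj: "(\<exists>J. u J \<in> M) \<or> (\<exists>K j0. \<forall>j\<ge>j0. \<not> Nb M K (u j))"
  proof (rule escape_or_enter[OF n0 per Mdef Rc _ orb lim])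
    fix z assume "z \<in> Pset M"
    then show "R z > 0" unfolding Pset_def[OF n0 per Mdef] R_def using good by simp
  qed
  show "\<exists>k. (shift ^^ k) wx \<in> M"
  proof (cases "\<exists>J. u J \<in> M")
    case True then show ?thesis unfolding u_def by blast
  next
    case False
    then obtain K j0 where away: "\<And>j. j \<ge> j0 \<Longrightarrow> \<not> Nb M K (u j)" using disj by blast
    define v where "v j = u (j + j0)" for j
    have orbv: "\<And>j. v (Suc j) = shift (v j)" unfolding v_def using orb by simp
    have limv: "(\<lambda>j. R (v j)) \<longlonglongrightarrow> 0"
      unfolding v_def using LIMSEQ_ignore_initial_segment[OF lim, of j0] by simp
    have awayv: "\<And>j q. j \<ge> 0 \<Longrightarrow> q \<in> M \<Longrightarrow> \<not> agree K (v j) q"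
      using away unfolding v_def Nb_def[OF n0 per Mdef] by auto
    show ?thesis
      using escape_impossible[OF Vsc Rc Rnn Asd mAs M_supp Mfin orbv limv awayv] by blast
  qed
qed


end
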